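(* Let $\mathcal{M}_1=(E_1,\mathcal{B}_1)$ and $\mathcal{M}_2=(E_2,\mathcal{B}_2)$ be matroids with $E_1\cap E_2=\{p\}$, where $p$ is not a coloop of both. Let $E_1\uplus E_2=(E_1\cup E_2\cup\{p_1,p_2\})\setminus\{p\}$, where $p_i$ plays the role of $p$ in $E_i$, so that $P_{\mathcal{M}_1}\times P_{\mathcal{M}_2}\subset\mathbb{R}^{E_1\uplus E_2}$. Then the base polytope of the series connection $\mathcal{S}(\mathcal{M}_1,\mathcal{M}_2)$ is linearly isomorphic to $(P_{\mathcal{M}_1}\times P_{\mathcal{M}_2})\cap\{x\in\mathbb{R}^{E_1\uplus E_2}: x_{p_1}+x_{p_2}\le 1\}$.
   Context: For a matroid $\mathcal{M}=(E,\mathcal{B})$, the base polytope is $P_{\mathcal{M}}=\operatorname{conv}\{\mathbf{1}_B:B\in\mathcal{B}\}\subset\mathbb{R}^E$. For $\mathcal{M}_1,\mathcal{M}_2$ as in the claim, the series connection $\mathcal{S}(\mathcal{M}_1,\mathcal{M}_2)$ is the matroid on $E_1\cup E_2$ with bases $\{B_1\cup B_2: B_1\in\mathcal{B}_1, B_2\in\mathcal{B}_2, B_1\cap B_2=\emptyset\}$. *)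

theory Defs
  imports "HOL-Analysis.Analysis" "HOL-Library.Function_Algebras"
begin

text \<open>We model \<open>\<real>^E\<close> (for a finite set E of elements of type 'a) as the functions
  \<open>'a \<Rightarrow> real\<close> vanishing outside E.\<close>

instantiation "fun" :: (type, real_vector) real_vector
begin
definition scaleR_fun :: "real \<Rightarrow> ('a \<Rightarrow> 'b) \<Rightarrow> 'a \<Rightarrow> 'b"
  where "scaleR_fun r f = (\<lambda>x. r *\<^sub>R f x)"
instance
  by standard (auto simp: scaleR_fun_def fun_eq_iff scaleR_add_right scaleR_add_left)
end

definition matroid_bases :: "'a set \<Rightarrow> 'a set set \<Rightarrow> bool" where
  "matroid_bases E \<B> \<longleftrightarrow>
     finite E \<and> \<B> \<noteq> {} \<and> (\<forall>B\<in>\<B>. B \<subseteq> E) \<and>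
     (\<forall>B1\<in>\<B>. \<forall>B2\<in>\<B>. \<forall>x\<in>B1 - B2. \<exists>y\<in>B2 - B1. insert y (B1 - {x}) \<in> \<B>)"

definition coloop :: "'a set set \<Rightarrow> 'a \<Rightarrow> bool" where
  "coloop \<B> e \<longleftrightarrow> (\<forall>B\<in>\<B>. e \<in> B)"

definition indic_vec :: "'a set \<Rightarrow> 'a \<Rightarrow> real" where
  "indic_vec B = (\<lambda>e. if e \<in> B then 1 else 0)"

definition base_polytope :: "'a set set \<Rightarrow> ('a \<Rightarrow> real) set" where
  "base_polytope \<B> = convex hull (indic_vec ` \<B>)"

definition series_bases :: "'a set set \<Rightarrow> 'a set set \<Rightarrow> 'a set set" where
  "series_bases \<B>1 \<B>2 = {B1 \<union> B2 | B1 B2. B1 \<in> \<B>1 \<and> B2 \<in> \<B>2 \<and> B1 \<inter> B2 = {}}"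

text \<open>Coordinates of a point of \<open>\<real>^(E1 \<uplus> E2)\<close> seen in the copy of \<open>E_i\<close>, where
  the new element q plays the role of p: the function on \<open>E_i\<close> which reads off
  coordinate q at p and coordinate e at every other e in \<open>E_i\<close>, and is 0 outside \<open>E_i\<close>.\<close>
definition relabel_part :: "'a set \<Rightarrow> 'a \<Rightarrow> 'a \<Rightarrow> ('a \<Rightarrow> real) \<Rightarrow> 'a \<Rightarrow> real" where
  "relabel_part E p q x = (\<lambda>e. if e = p then x q else if e \<in> E then x e else 0)"

definition glued_product :: "'a set \<Rightarrow> 'a set set \<Rightarrow> 'a set \<Rightarrow> 'a set set \<Rightarrow> 'a \<Rightarrow> 'a \<Rightarrow> 'a
    \<Rightarrow> ('a \<Rightarrow> real) set" where
  "glued_product E1 \<B>1 E2 \<B>2 p p1 p2 =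
     {x. (\<forall>e. e \<notin> (E1 \<union> E2 \<union> {p1, p2}) - {p} \<longrightarrow> x e = 0) \<and>
         relabel_part E1 p p1 x \<in> base_polytope \<B>1 \<and>
         relabel_part E2 p p2 x \<in> base_polytope \<B>2}"

definition linearly_isomorphic :: "('a \<Rightarrow> real) set \<Rightarrow> ('a \<Rightarrow> real) set \<Rightarrow> bool" where
  "linearly_isomorphic P Q \<longleftrightarrow> (\<exists>f. linear f \<and> inj_on f (span P) \<and> f ` P = Q)"

end

theory Submission
  imports Defs
begin

lemma hull_Un_split:
  fixes S T :: "'m::real_vector set"
  assumes "convex S" "S \<noteq> {}" "convex T" "T \<noteq> {}" "x \<in> convex hull (S \<union> T)"
  shows "\<exists>u v s t. u \<ge> 0 \<and> v \<ge> 0 \<and> u + v = 1 \<and> s \<in> S \<and> t \<in> T \<and> x = u *\<^sub>R s + v *\<^sub>R t"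
proof -
  define I :: "nat set" where "I = {1, 2}"
  define s where "s i = (if i = (1::nat) then S else T)" for i
  have "\<Union>(s ` I) = S \<union> T"
    using s_def I_def by auto
  moreover have "convex hull \<Union>(s ` I) =
    {\<Sum> i\<in>I. c i *\<^sub>R sa i | c sa. (\<forall>i\<in>I. 0 \<le> c i) \<and> sum c I = 1 \<and> (\<forall>i\<in>I. sa i \<in> s i)}"
      using assms s_def I_def
      by (subst convex_hull_finite_union) auto
  ultimately obtain c sa where "x = (\<Sum> i\<in>I. c i *\<^sub>R sa i)" "\<forall>i\<in>I. 0 \<le> c i" "sum c I = 1" "\<forall>i\<in>I. sa i \<in> s i"
    using assms(5) by auto
  then show ?thesis unfolding I_def s_def
    by (intro exI[of _ "c 1"] exI[of _ "c 2"] exI[of _ "sa 1"] exI[of _ "sa 2"]) auto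
qed

lemma coord_hull:
  fixes A :: "('a \<Rightarrow> real) set"
  assumes "\<forall>y\<in>A. y p = c" "x \<in> convex hull A"
  shows "x p = c"
proof -
  have "convex {y::'a\<Rightarrow>real. y p = c}"
    unfolding convex_def
  proof (clarsimp simp: scaleR_fun_def plus_fun_def)
    fix x :: "'a \<Rightarrow> real" and u v :: real assume "u + v = 1"
    then show "u * x p + v * x p = x p" by (metis distrib_right mult_1)
  qed
  then have "convex hull A \<subseteq> {y. y p = c}" using assms(1) by (intro hull_minimal) auto
  then show ?thesis using assms(2) by auto
qed

lemma coord_hull01:
  fixes A :: "('a \<Rightarrow> real) set"
  assumes "\<forall>y\<in>A. 0 \<le> y p \<and> y p \<le> 1" "x \<in> convex hull A"
  shows "0 \<le> x p \<and> x p \<le> 1"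
proof -
  have "convex {y::'a\<Rightarrow>real. 0 \<le> y p \<and> y p \<le> 1}"
    unfolding convex_def
  proof (clarsimp simp: scaleR_fun_def plus_fun_def)
    fix x y :: "'a\<Rightarrow>real" and u v :: real
    assume h: "0 \<le> x p" "x p \<le> 1" "0 \<le> y p" "y p \<le> 1" "0 \<le> u" "0 \<le> v" "u + v = 1"
    have "u * x p \<le> u" "v * y p \<le> v" using h by (auto intro: mult_left_le)
    then show "u * x p + v * y p \<le> 1" using h by auto
  qed
  then have "convex hull A \<subseteq> {y. 0 \<le> y p \<and> y p \<le> 1}" using assms(1) by (intro hull_minimal) auto
  then show ?thesis using assms(2) by auto
qed

lemma split_p:
  fixes A :: "('a \<Rightarrow> real) set"
  assumes "\<forall>y\<in>A. y p = 0 \<or> y p = 1" "a \<in> convex hull A"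
  shows "\<exists>a0 a1. a = (a p) *\<^sub>R a1 + (1 - a p) *\<^sub>R a0 \<and>
     (a p \<noteq> 0 \<longrightarrow> a1 \<in> convex hull {y\<in>A. y p = 1}) \<and>
     (a p \<noteq> 1 \<longrightarrow> a0 \<in> convex hull {y\<in>A. y p = 0})"
proof -
  let ?A1 = "{y\<in>A. y p = 1}" and ?A0 = "{y\<in>A. y p = 0}"
  have AU: "A = ?A1 \<union> ?A0" using assms(1) by auto
  show ?thesis
  proof (cases "?A1 = {}")
    case True
    then have "A = ?A0" using AU by auto
    then have "a \<in> convex hull ?A0" using assms(2) by simp
    moreover have "a p = 0" by (rule coord_hull[OF _ calculation]) auto
    ultimately show ?thesis by (intro exI[of _ a]) auto
  next
    case F1: False
    show ?thesis
    proof (cases "?A0 = {}")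
      case True
      then have "A = ?A1" using AU by auto
      then have "a \<in> convex hull ?A1" using assms(2) by simp
      moreover have "a p = 1" by (rule coord_hull[OF _ calculation]) auto
      ultimately show ?thesis by (intro exI[of _ a]) auto
    next
      case F0: False
      have "convex hull A \<subseteq> convex hull (convex hull ?A1 \<union> convex hull ?A0)"
        by (subst AU, rule hull_mono) (auto intro: hull_subset[THEN subsetD])
      then have "a \<in> convex hull (convex hull ?A1 \<union> convex hull ?A0)" using assms(2) by blast
      then have "\<exists>u v s t. u \<ge> 0 \<and> v \<ge> 0 \<and> u + v = 1 \<and> s \<in> convex hull ?A1 \<and> t \<in> convex hull ?A0 \<and> a = u *\<^sub>R s + v *\<^sub>R t"
        using hull_Un_split[of "convex hull ?A1" "convex hull ?A0" a] F0 F1 by auto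
      then obtain u v s t where h: "u \<ge> 0" "v \<ge> 0" "u + v = 1" "s \<in> convex hull ?A1" "t \<in> convex hull ?A0"
          "a = u *\<^sub>R s + v *\<^sub>R t"
        by blast
      have "s p = 1" by (rule coord_hull[OF _ h(4)]) auto
      moreover have "t p = 0" by (rule coord_hull[OF _ h(5)]) auto
      ultimately have "a p = u" using h by (simp add: scaleR_fun_def plus_fun_def)
      then show ?thesis using h by (intro exI[of _ t] exI[of _ s]) auto
    qed
  qed
qed

lemma bases_card_aux:
  assumes M: "matroid_bases E \<B>"
  shows "\<forall>B1 B2. B1 \<in> \<B> \<longrightarrow> B2 \<in> \<B> \<longrightarrow> card (B1 - B2) = n \<longrightarrow> card (B2 - B1) = n"
proof (induction n)
  case 0
  show ?case
  proof (intro allI impI)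
    fix B1 B2 assume h: "B1 \<in> \<B>" "B2 \<in> \<B>" "card (B1 - B2) = 0"
    have fin: "finite B1" "finite B2" using M h unfolding matroid_bases_def by (metis finite_subset)+
    then have e: "B1 - B2 = {}" using h by auto
    have "B2 - B1 = {}"
    proof (rule ccontr)
      assume "B2 - B1 \<noteq> {}"
      then obtain x where "x \<in> B2 - B1" by auto
      then obtain y where "y \<in> B1 - B2" using M h unfolding matroid_bases_def by blast
      then show False using e by auto
    qed
    then show "card (B2 - B1) = 0" by (metis card.empty)
  qed
next
  case (Suc n)
  show ?case
  proof (intro allI impI)
    fix B1 B2 assume h: "B1 \<in> \<B>" "B2 \<in> \<B>" "card (B1 - B2) = Suc n"
    have fin: "finite B1" "finite B2" using M h unfolding matroid_bases_def by (metis finite_subset)+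
    obtain x where x: "x \<in> B1 - B2" using h(3) by (metis card.empty ex_in_conv nat.distinct(1))
    then obtain y where y: "y \<in> B2 - B1" and B: "insert y (B1 - {x}) \<in> \<B>"
      using M h unfolding matroid_bases_def by blast
    have "insert y (B1 - {x}) - B2 = (B1 - B2) - {x}" using y by auto
    then have "card (insert y (B1 - {x}) - B2) = n" using h(3) x fin by simp
    then have "card (B2 - insert y (B1 - {x})) = n" using Suc.IH B h(2) by blast
    moreover have "B2 - insert y (B1 - {x}) = (B2 - B1) - {y}" using x by auto
    ultimately have "card ((B2 - B1) - {y}) = n" by simp
    moreover have "card (B2 - B1) = Suc (card (B2 - B1 - {y}))" using y fin by (intro card.remove) auto
    ultimately show "card (B2 - B1) = Suc n" by simp
  qed
qed

lemma bases_card: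
  assumes M: "matroid_bases E \<B>" and "B1 \<in> \<B>" "B2 \<in> \<B>"
  shows "card B1 = card B2"
proof -
  have fin: "finite B1" "finite B2" using assms unfolding matroid_bases_def by (metis finite_subset)+
  have "card (B2 - B1) = card (B1 - B2)" using bases_card_aux[OF M] assms by blast
  moreover have "card B1 = card (B1 \<inter> B2) + card (B1 - B2)"
    using fin by (metis card_Int_Diff)
  moreover have "card B2 = card (B1 \<inter> B2) + card (B2 - B1)"
    using fin by (metis card_Int_Diff inf_commute)
  ultimately show ?thesis by simp
qed

lemma sum_indic: "finite S \<Longrightarrow> sum (indic_vec B) S = real (card (S \<inter> B))"
  by (simp add: indic_vec_def sum.If_cases)


lemma conv3:
  assumes S: "convex S" and "0 \<le> u" "0 \<le> v" "0 \<le> w" "u + v + w = 1"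
    and "u \<noteq> 0 \<longrightarrow> x \<in> S" "v \<noteq> 0 \<longrightarrow> y \<in> S" "w \<noteq> 0 \<longrightarrow> z \<in> S"
  shows "u *\<^sub>R x + v *\<^sub>R y + w *\<^sub>R z \<in> S"
proof -
  obtain q where q: "q \<in> S" using assms by (metis add.right_neutral add_0 zero_neq_one)
  define x' where "x' = (if u = 0 then q else x)"
  define y' where "y' = (if v = 0 then q else y)"
  define z' where "z' = (if w = 0 then q else z)"
  have eq: "u *\<^sub>R x + v *\<^sub>R y + w *\<^sub>R z = u *\<^sub>R x' + v *\<^sub>R y' + w *\<^sub>R z'"
    by (simp add: x'_def y'_def z'_def)
  have "{x', y', z'} \<subseteq> S" using assms q by (auto simp: x'_def y'_def z'_def)
  then have "convex hull {x', y', z'} \<subseteq> S" using S by (intro hull_minimal) auto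
  moreover have "u *\<^sub>R x' + v *\<^sub>R y' + w *\<^sub>R z' \<in> convex hull {x', y', z'}"
    unfolding convex_hull_3 using assms by blast
  ultimately show ?thesis using eq by auto
qed

definition glue :: "'a set \<Rightarrow> 'a set \<Rightarrow> 'a \<Rightarrow> 'a \<Rightarrow> 'a \<Rightarrow> ('a\<Rightarrow>real) \<Rightarrow> ('a\<Rightarrow>real) \<Rightarrow> 'a \<Rightarrow> real" where
  "glue E1 E2 p p1 p2 a b = (\<lambda>e. if e = p1 then a p else if e = p2 then b p
     else if e \<in> E1 - {p} then a e else if e \<in> E2 - {p} then b e else 0)"

lemma glue_add: "glue E1 E2 p p1 p2 (a + a') (b + b') = glue E1 E2 p p1 p2 a b + glue E1 E2 p p1 p2 a' b'"
  unfolding glue_def plus_fun_def by (rule ext) simp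

lemma glue_scale: "glue E1 E2 p p1 p2 (c *\<^sub>R a) (c *\<^sub>R b) = c *\<^sub>R glue E1 E2 p p1 p2 a b"
  unfolding glue_def scaleR_fun_def by (rule ext) simp

lemma glue_linear: "linear (\<lambda>(a, b). glue E1 E2 p p1 p2 a b)"
proof (rule linearI)
  fix x y :: "('a\<Rightarrow>real) \<times> ('a\<Rightarrow>real)"
  show "(case x + y of (a, b) \<Rightarrow> glue E1 E2 p p1 p2 a b) =
        (case x of (a, b) \<Rightarrow> glue E1 E2 p p1 p2 a b) + (case y of (a, b) \<Rightarrow> glue E1 E2 p p1 p2 a b)"
    by (cases x; cases y) (simp add: glue_add)
next
  fix c :: real and x :: "('a\<Rightarrow>real) \<times> ('a\<Rightarrow>real)"
  show "(case c *\<^sub>R x of (a, b) \<Rightarrow> glue E1 E2 p p1 p2 a b) =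
        c *\<^sub>R (case x of (a, b) \<Rightarrow> glue E1 E2 p p1 p2 a b)"
    by (cases x) (simp add: glue_scale)
qed

lemma pair_decomp: fixes a b a0 a1 b0 b1 :: "'a \<Rightarrow> real"
  assumes ha: "a = s *\<^sub>R a1 + (1 - s) *\<^sub>R a0" and hb: "b = t *\<^sub>R b1 + (1 - t) *\<^sub>R b0"
  shows "(a, b) = t *\<^sub>R (a0, b1) + s *\<^sub>R (a1, b0) + (1 - s - t) *\<^sub>R (a0, b0)"
proof -
  have "a = t *\<^sub>R a0 + s *\<^sub>R a1 + (1 - s - t) *\<^sub>R a0" unfolding ha by (simp add: algebra_simps)
  moreover have "b = t *\<^sub>R b1 + s *\<^sub>R b0 + (1 - s - t) *\<^sub>R b0" unfolding hb by (simp add: algebra_simps)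
  ultimately show ?thesis by simp
qed

theorem lemma3p6:
  fixes E1 E2 :: "'a set" and \<B>1 \<B>2 :: "'a set set" and p p1 p2 :: 'a
  assumes "matroid_bases E1 \<B>1" and "matroid_bases E2 \<B>2"
    and "E1 \<inter> E2 = {p}"
    and "\<not> (coloop \<B>1 p \<and> coloop \<B>2 p)"
    and "p1 \<notin> E1 \<union> E2" and "p2 \<notin> E1 \<union> E2" and "p1 \<noteq> p2"
  shows "linearly_isomorphic (base_polytope (series_bases \<B>1 \<B>2))
           (glued_product E1 \<B>1 E2 \<B>2 p p1 p2 \<inter> {x. x p1 + x p2 \<le> 1})"
proof -
  note M1 = assms(1) and M2 = assms(2) and E12 = assms(3) and hp1 = assms(5) and hp2 = assms(6)
    and p12 = assms(7)
  have pp: "p \<noteq> p1" "p \<noteq> p2" using E12 hp1 hp2 by auto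
  have finE: "finite E1" "finite E2" using M1 M2 unfolding matroid_bases_def by auto
  have sub1: "\<And>B. B \<in> \<B>1 \<Longrightarrow> B \<subseteq> E1" using M1 unfolding matroid_bases_def by auto
  have sub2: "\<And>B. B \<in> \<B>2 \<Longrightarrow> B \<subseteq> E2" using M2 unfolding matroid_bases_def by auto
  obtain B01 where B01: "B01 \<in> \<B>1" using M1 unfolding matroid_bases_def by auto
  obtain B02 where B02: "B02 \<in> \<B>2" using M2 unfolding matroid_bases_def by auto
  define r1 where "r1 = card B01"
  define r2 where "r2 = card B02"
  have card1: "\<And>B. B \<in> \<B>1 \<Longrightarrow> card B = r1" using bases_card[OF M1 _ B01] r1_def by auto
  have card2: "\<And>B. B \<in> \<B>2 \<Longrightarrow> card B = r2" using bases_card[OF M2 _ B02] r2_def by auto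
  define c1 :: real where "c1 = (if r1 + r2 = 0 then 1 else real r1 / real (r1 + r2))"
  define c2 :: real where "c2 = 1 - c1"
  have c1r: "c1 * real (r1 + r2) = real r1"
  proof (cases "r1 + r2 = 0")
    case True then show ?thesis by (simp add: c1_def)
  next
    case False
    then have "real (r1 + r2) \<noteq> 0" by linarith
    then show ?thesis using False unfolding c1_def by (simp del: of_nat_add)
  qed
  have c2r: "c2 * real (r1 + r2) = real r2" using c1r by (simp add: c2_def algebra_simps)
  define G where "G = glue E1 E2 p p1 p2"
  define L where "L = (\<lambda>(a, b). G a b)"
  have linL: "linear L" unfolding L_def G_def by (rule glue_linear)
  define f where "f = (\<lambda>y::'a\<Rightarrow>real. \<lambda>e. if e = p1 then c1 * sum y (E1 \<union> E2) - sum y (E1 - {p})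
     else if e = p2 then c2 * sum y (E1 \<union> E2) - sum y (E2 - {p})
     else if e \<in> (E1 \<union> E2) - {p} then y e else 0)"
  have linf: "linear f"
  proof (rule linearI)
    fix x y :: "'a \<Rightarrow> real"
    show "f (x + y) = f x + f y"
      unfolding f_def plus_fun_def by (rule ext) (simp add: sum.distrib algebra_simps)
  next
    fix c :: real and x :: "'a \<Rightarrow> real"
    show "f (c *\<^sub>R x) = c *\<^sub>R f x"
      unfolding f_def scaleR_fun_def by (rule ext) (simp add: sum_distrib_left algebra_simps)
  qed
  define D where "D = {(B1, B2). B1 \<in> \<B>1 \<and> B2 \<in> \<B>2 \<and> B1 \<inter> B2 = {}}"
  define W where "W = (\<lambda>(B1, B2). (indic_vec B1, indic_vec B2)) ` D"
  define P where "P = base_polytope (series_bases \<B>1 \<B>2)"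
  define Q where "Q = glued_product E1 \<B>1 E2 \<B>2 p p1 p2 \<inter> {x. x p1 + x p2 \<le> 1}"
  have ser: "series_bases \<B>1 \<B>2 = (\<lambda>(B1, B2). B1 \<union> B2) ` D"
    unfolding series_bases_def D_def by auto
  have fG: "f (indic_vec (B1 \<union> B2)) = G (indic_vec B1) (indic_vec B2)" if "(B1, B2) \<in> D" for B1 B2
  proof -
    have h: "B1 \<in> \<B>1" "B2 \<in> \<B>2" "B1 \<inter> B2 = {}" using that D_def by auto
    have s1: "B1 \<subseteq> E1" "B2 \<subseteq> E2" using h sub1 sub2 by auto
    have fin: "finite B1" "finite B2" using s1 finE finite_subset by auto
    have cU: "card (B1 \<union> B2) = r1 + r2" using h fin card1 card2 by (simp add: card_Un_disjoint)
    have i1: "(E1 \<union> E2) \<inter> (B1 \<union> B2) = B1 \<union> B2" using s1 by auto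
    have i2: "(E1 - {p}) \<inter> (B1 \<union> B2) = B1 - {p}" using s1 E12 by auto
    have i3: "(E2 - {p}) \<inter> (B1 \<union> B2) = B2 - {p}" using s1 E12 by auto
    have d1: "real (card (B1 - {p})) + (if p \<in> B1 then 1 else 0) = real r1"
    proof (cases "p \<in> B1")
      case True
      then have "card B1 = Suc (card (B1 - {p}))" using fin True by (intro card.remove)
      then show ?thesis using True card1[OF h(1)] by simp
    next
      case False
      then have "B1 - {p} = B1" by simp
      then show ?thesis using False card1[OF h(1)] by simp
    qed
    have d2: "real (card (B2 - {p})) + (if p \<in> B2 then 1 else 0) = real r2"
    proof (cases "p \<in> B2")
      case True
      then have "card B2 = Suc (card (B2 - {p}))" using fin True by (intro card.remove)
      then show ?thesis using True card2[OF h(2)] by simp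
    next
      case False
      then have "B2 - {p} = B2" by simp
      then show ?thesis using False card2[OF h(2)] by simp
    qed
    have v1: "f (indic_vec (B1 \<union> B2)) p1 = indic_vec B1 p"
    proof -
      have "f (indic_vec (B1 \<union> B2)) p1 = c1 * real (card ((E1 \<union> E2) \<inter> (B1 \<union> B2))) - real (card ((E1 - {p}) \<inter> (B1 \<union> B2)))"
        using finE by (simp add: f_def sum_indic)
      also have "\<dots> = c1 * real (r1 + r2) - real (card (B1 - {p}))" by (simp only: i1 i2 cU)
      also have "\<dots> = indic_vec B1 p" using c1r d1 by (simp add: indic_vec_def)
      finally show ?thesis .
    qed
    have v2: "f (indic_vec (B1 \<union> B2)) p2 = indic_vec B2 p"
    proof -
      have "f (indic_vec (B1 \<union> B2)) p2 = c2 * real (card ((E1 \<union> E2) \<inter> (B1 \<union> B2))) - real (card ((E2 - {p}) \<inter> (B1 \<union> B2)))"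
        using finE p12 by (simp add: f_def sum_indic)
      also have "\<dots> = c2 * real (r1 + r2) - real (card (B2 - {p}))" by (simp only: i1 i3 cU)
      also have "\<dots> = indic_vec B2 p" using c2r d2 by (simp add: indic_vec_def)
      finally show ?thesis .
    qed
    show ?thesis
    proof (rule ext)
      fix e
      show "f (indic_vec (B1 \<union> B2)) e = G (indic_vec B1) (indic_vec B2) e"
      proof (cases "e = p1 \<or> e = p2")
        case True
        then show ?thesis using v1 v2 p12 by (auto simp: G_def glue_def)
      next
        case False
        then show ?thesis using s1 E12 h(3)
          by (auto simp: G_def glue_def f_def indic_vec_def)
      qed
    qed
  qed
  have img: "f ` indic_vec ` series_bases \<B>1 \<B>2 = L ` W"
  proof -
    have "f ` indic_vec ` series_bases \<B>1 \<B>2 = (\<lambda>(B1, B2). f (indic_vec (B1 \<union> B2))) ` D"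
      unfolding ser by (auto simp: image_image case_prod_unfold)
    also have "\<dots> = (\<lambda>(B1, B2). L (indic_vec B1, indic_vec B2)) ` D"
      using fG by (auto simp: L_def intro!: image_cong)
    also have "\<dots> = L ` W" unfolding W_def by (auto simp: image_image case_prod_unfold)
    finally show ?thesis .
  qed
  have fP: "f ` P = convex hull (L ` W)"
    unfolding P_def base_polytope_def convex_hull_linear_image[OF linf] img ..
  have rl: "relabel_part E p q (u *\<^sub>R x + v *\<^sub>R y) = u *\<^sub>R relabel_part E p q x + v *\<^sub>R relabel_part E p q y"
    for E q u v and x y :: "'a \<Rightarrow> real"
    unfolding relabel_part_def plus_fun_def scaleR_fun_def by (rule ext) simp
  have convQ: "convex Q"
    unfolding convex_def
  proof (intro ballI allI impI)
    fix x y :: "'a \<Rightarrow> real" and u v :: real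
    assume x: "x \<in> Q" and y: "y \<in> Q" and uv: "0 \<le> u" "0 \<le> v" "u + v = 1"
    have "u * (x p1 + x p2) + v * (y p1 + y p2) \<le> u * 1 + v * 1"
      using x y uv unfolding Q_def by (intro add_mono mult_left_mono) auto
    then have s: "u * x p1 + v * y p1 + (u * x p2 + v * y p2) \<le> 1" using uv by (simp add: algebra_simps)
    have xm: "relabel_part E1 p p1 x \<in> convex hull (indic_vec ` \<B>1)"
        "relabel_part E2 p p2 x \<in> convex hull (indic_vec ` \<B>2)"
        "\<forall>e. e \<notin> (E1 \<union> E2 \<union> {p1, p2}) - {p} \<longrightarrow> x e = 0"
      using x unfolding Q_def glued_product_def base_polytope_def by auto
    have ym: "relabel_part E1 p p1 y \<in> convex hull (indic_vec ` \<B>1)"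
        "relabel_part E2 p p2 y \<in> convex hull (indic_vec ` \<B>2)"
        "\<forall>e. e \<notin> (E1 \<union> E2 \<union> {p1, p2}) - {p} \<longrightarrow> y e = 0"
      using y unfolding Q_def glued_product_def base_polytope_def by auto
    have m1: "relabel_part E1 p p1 (u *\<^sub>R x + v *\<^sub>R y) \<in> base_polytope \<B>1"
      unfolding rl base_polytope_def by (rule convexD[OF convex_convex_hull xm(1) ym(1) uv])
    have m2: "relabel_part E2 p p2 (u *\<^sub>R x + v *\<^sub>R y) \<in> base_polytope \<B>2"
      unfolding rl base_polytope_def by (rule convexD[OF convex_convex_hull xm(2) ym(2) uv])
    have m3: "\<forall>e. e \<notin> (E1 \<union> E2 \<union> {p1, p2}) - {p} \<longrightarrow> (u *\<^sub>R x + v *\<^sub>R y) e = 0"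
      using xm(3) ym(3) by (simp add: plus_fun_def scaleR_fun_def)
    have m4: "(u *\<^sub>R x + v *\<^sub>R y) p1 + (u *\<^sub>R x + v *\<^sub>R y) p2 \<le> 1"
      using s by (simp add: plus_fun_def scaleR_fun_def)
    show "u *\<^sub>R x + v *\<^sub>R y \<in> Q"
      unfolding Q_def glued_product_def using m1 m2 m3 m4 by blast
  qed
  have GQ: "G (indic_vec B1) (indic_vec B2) \<in> Q" if "(B1, B2) \<in> D" for B1 B2
  proof -
    have h: "B1 \<in> \<B>1" "B2 \<in> \<B>2" "B1 \<inter> B2 = {}" using that D_def by auto
    have s1: "B1 \<subseteq> E1" "B2 \<subseteq> E2" using h sub1 sub2 by auto
    have r1: "relabel_part E1 p p1 (G (indic_vec B1) (indic_vec B2)) = indic_vec B1"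
      unfolding relabel_part_def G_def glue_def indic_vec_def by (rule ext) (use s1 hp1 hp2 E12 in auto)
    have r2: "relabel_part E2 p p2 (G (indic_vec B1) (indic_vec B2)) = indic_vec B2"
      unfolding relabel_part_def G_def glue_def indic_vec_def by (rule ext) (use s1 hp1 hp2 E12 p12 in auto)
    have "indic_vec B1 \<in> base_polytope \<B>1" "indic_vec B2 \<in> base_polytope \<B>2"
      using h unfolding base_polytope_def by (auto intro: hull_subset[THEN subsetD])
    moreover have "indic_vec B1 p + indic_vec B2 p \<le> 1" using h(3) by (auto simp: indic_vec_def)
    moreover have "\<forall>e. e \<notin> (E1 \<union> E2 \<union> {p1, p2}) - {p} \<longrightarrow> G (indic_vec B1) (indic_vec B2) e = 0"
      using pp by (auto simp: G_def glue_def)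
    moreover have "G (indic_vec B1) (indic_vec B2) p1 + G (indic_vec B1) (indic_vec B2) p2
       = indic_vec B1 p + indic_vec B2 p" using p12 by (simp add: G_def glue_def)
    ultimately show ?thesis unfolding Q_def glued_product_def using r1 r2 by simp
  qed
  have sub_Q: "convex hull (L ` W) \<subseteq> Q"
    using convQ GQ by (intro hull_minimal) (auto simp: W_def L_def)
  have Q_sub: "Q \<subseteq> convex hull (L ` W)"
  proof
    fix x assume x: "x \<in> Q"
    define a where "a = relabel_part E1 p p1 x"
    define b where "b = relabel_part E2 p p2 x"
    have a: "a \<in> convex hull (indic_vec ` \<B>1)" and b: "b \<in> convex hull (indic_vec ` \<B>2)"
      and van: "\<And>e. e \<notin> (E1 \<union> E2 \<union> {p1, p2}) - {p} \<Longrightarrow> x e = 0"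
      and st: "x p1 + x p2 \<le> 1"
      using x unfolding Q_def glued_product_def base_polytope_def a_def b_def by auto
    have xG: "x = G a b"
    proof (rule ext)
      fix e show "x e = G a b e"
        using van[of e] p12 hp1 hp2 by (auto simp: G_def glue_def a_def b_def relabel_part_def)
    qed
    have ap: "a p = x p1" "b p = x p2" by (auto simp: a_def b_def relabel_part_def)
    let ?A = "indic_vec ` \<B>1" and ?C = "indic_vec ` \<B>2"
    have ind01: "\<forall>y\<in>indic_vec ` X. y p = 0 \<or> y p = 1" for X :: "'a set set"
      by (auto simp: indic_vec_def)
    have ind01': "\<forall>y\<in>indic_vec ` X. 0 \<le> y p \<and> y p \<le> 1" for X :: "'a set set"
      by (auto simp: indic_vec_def)
    define s where "s = a p"
    define t where "t = b p"
    have s01: "0 \<le> s" "s \<le> 1" using coord_hull01[OF ind01' a] s_def by auto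
    have t01: "0 \<le> t" "t \<le> 1" using coord_hull01[OF ind01' b] t_def by auto
    have st1: "s + t \<le> 1" using st ap s_def t_def by simp
    obtain a0 a1 where ha: "a = s *\<^sub>R a1 + (1 - s) *\<^sub>R a0"
      and ha1: "s \<noteq> 0 \<longrightarrow> a1 \<in> convex hull {y\<in>?A. y p = 1}"
      and ha0: "s \<noteq> 1 \<longrightarrow> a0 \<in> convex hull {y\<in>?A. y p = 0}"
      using split_p[OF ind01 a] unfolding s_def by blast
    obtain b0 b1 where hb: "b = t *\<^sub>R b1 + (1 - t) *\<^sub>R b0"
      and hb1: "t \<noteq> 0 \<longrightarrow> b1 \<in> convex hull {y\<in>?C. y p = 1}"
      and hb0: "t \<noteq> 1 \<longrightarrow> b0 \<in> convex hull {y\<in>?C. y p = 0}"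
      using split_p[OF ind01 b] unfolding t_def by blast
    define A0 where "A0 = {y\<in>?A. y p = 0}"
    define A1 where "A1 = {y\<in>?A. y p = 1}"
    define C0 where "C0 = {y\<in>?C. y p = 0}"
    define C1 where "C1 = {y\<in>?C. y p = 1}"
    have TW: "(A0 \<times> C1) \<union> (A1 \<times> C0) \<union> (A0 \<times> C0) \<subseteq> W"
    proof
      fix z assume z: "z \<in> (A0 \<times> C1) \<union> (A1 \<times> C0) \<union> (A0 \<times> C0)"
      then obtain B1 B2 where z': "z = (indic_vec B1, indic_vec B2)" "B1 \<in> \<B>1" "B2 \<in> \<B>2"
        "indic_vec B1 p = 0 \<or> indic_vec B2 p = 0"
        unfolding A0_def A1_def C0_def C1_def by auto
      then have "p \<notin> B1 \<or> p \<notin> B2" by (auto simp: indic_vec_def split: if_splits)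
      have "B1 \<subseteq> E1" "B2 \<subseteq> E2" using z' sub1 sub2 by auto
      then have "B1 \<inter> B2 = {}" using \<open>p \<notin> B1 \<or> p \<notin> B2\<close> E12 by auto
      then show "z \<in> W" unfolding W_def D_def using z' by auto
    qed
    have mem: "G a' b' \<in> convex hull (L ` W)"
      if "a' \<in> convex hull X" "b' \<in> convex hull Y" "X \<times> Y \<subseteq> W" for a' b' X Y
    proof -
      have "(a', b') \<in> convex hull (X \<times> Y)" using that by (simp add: convex_hull_Times)
      then have "L (a', b') \<in> convex hull (L ` (X \<times> Y))"
        by (rule in_convex_hull_linear_image[OF linL])
      also have "\<dots> \<subseteq> convex hull (L ` W)" using that(3) by (intro hull_mono image_mono)
      finally show ?thesis by (simp add: L_def)
    qed
    have TWs: "A0 \<times> C1 \<subseteq> W" "A1 \<times> C0 \<subseteq> W" "A0 \<times> C0 \<subseteq> W" using TW by auto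
    have decomp: "G a b = t *\<^sub>R G a0 b1 + s *\<^sub>R G a1 b0 + (1 - s - t) *\<^sub>R G a0 b0"
    proof -
      have "L (a, b) = t *\<^sub>R L (a0, b1) + s *\<^sub>R L (a1, b0) + (1 - s - t) *\<^sub>R L (a0, b0)"
        by (simp only: pair_decomp[OF ha hb] linear_add[OF linL] linear_scale[OF linL])
      then show ?thesis by (simp add: L_def)
    qed
    have "t *\<^sub>R G a0 b1 + s *\<^sub>R G a1 b0 + (1 - s - t) *\<^sub>R G a0 b0 \<in> convex hull (L ` W)"
    proof (rule conv3[OF convex_convex_hull])
      show "0 \<le> t" "0 \<le> s" "0 \<le> 1 - s - t" "t + s + (1 - s - t) = 1" using s01 t01 st1 by auto
      show "t \<noteq> 0 \<longrightarrow> G a0 b1 \<in> convex hull (L ` W)"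
      proof
        assume "t \<noteq> 0" then have "s \<noteq> 1" using t01 st1 by auto
        then show "G a0 b1 \<in> convex hull (L ` W)"
          using \<open>t \<noteq> 0\<close> ha0 hb1 TWs mem unfolding A0_def C1_def by blast
      qed
      show "s \<noteq> 0 \<longrightarrow> G a1 b0 \<in> convex hull (L ` W)"
      proof
        assume "s \<noteq> 0" then have "t \<noteq> 1" using s01 st1 by auto
        then show "G a1 b0 \<in> convex hull (L ` W)"
          using \<open>s \<noteq> 0\<close> ha1 hb0 TWs mem unfolding A1_def C0_def by blast
      qed
      show "1 - s - t \<noteq> 0 \<longrightarrow> G a0 b0 \<in> convex hull (L ` W)"
      proof
        assume "1 - s - t \<noteq> 0" then have "s \<noteq> 1" "t \<noteq> 1" using s01 t01 st1 by auto
        then show "G a0 b0 \<in> convex hull (L ` W)"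
          using ha0 hb0 TWs mem unfolding A0_def C0_def by blast
      qed
    qed
    then show "x \<in> convex hull (L ` W)" using xG decomp by simp
  qed
  define V where "V = {y::'a\<Rightarrow>real. \<forall>e. e \<notin> E1 \<union> E2 \<longrightarrow> y e = 0}"
  have subV: "subspace V" unfolding subspace_def V_def
    by (auto simp: plus_fun_def scaleR_fun_def)
  have PV: "P \<subseteq> V"
  proof -
    have "indic_vec ` series_bases \<B>1 \<B>2 \<subseteq> V"
      using sub1 sub2 unfolding V_def series_bases_def by (auto simp: indic_vec_def) blast+
    then show ?thesis unfolding P_def base_polytope_def
      by (intro hull_minimal subspace_imp_convex[OF subV])
  qed
  have spanV: "span P \<subseteq> V" by (rule span_minimal[OF PV subV])
  have kern: "y = 0" if "y \<in> V" "f y = 0" for y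
  proof -
    have y0: "y e = 0" if "e \<in> (E1 \<union> E2) - {p}" for e
    proof -
      have "e \<noteq> p1" "e \<noteq> p2" using that hp1 hp2 by auto
      then show ?thesis using fun_cong[OF \<open>f y = 0\<close>, of e] that by (simp add: f_def)
    qed
    have S1: "sum y (E1 - {p}) = 0" using y0 by (intro sum.neutral) auto
    have S2: "sum y (E2 - {p}) = 0" using y0 by (intro sum.neutral) auto
    have pE: "p \<in> E1 \<union> E2" using E12 by auto
    have S: "sum y (E1 \<union> E2) = y p"
      using finE pE y0 by (subst sum.remove[of _ p]) (auto intro!: sum.neutral)
    have "f y p1 + f y p2 = y p" using S S1 S2 p12 by (simp add: f_def c2_def algebra_simps)
    then have "y p = 0" using \<open>f y = 0\<close> by simp
    show "y = 0"
    proof (rule ext)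
      fix e show "y e = 0 e"
        using y0[of e] \<open>y p = 0\<close> \<open>y \<in> V\<close> unfolding V_def by (cases "e \<in> E1 \<union> E2") auto
    qed
  qed
  have inj: "inj_on f (span P)"
  proof (rule inj_onI)
    fix x y assume "x \<in> span P" "y \<in> span P" "f x = f y"
    then have "x - y \<in> V" "f (x - y) = 0"
      using spanV span_diff linear_diff[OF linf] by auto
    then have "x - y = 0" using kern by blast
    then show "x = y" by simp
  qed
  have fPQ: "f ` P = Q" using fP sub_Q Q_sub by simp
  have "linearly_isomorphic P Q"
    unfolding linearly_isomorphic_def using linf inj fPQ by blast
  then show ?thesis unfolding P_def Q_def .
qed

end
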